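(* Let $D([0,1],\mathbb{C})$ be the space of càdlàg functions from $[0,1]$ to $\mathbb{C}$. Suppose $f_n\in D([0,1],\mathbb{C})$ converge uniformly to $f\in C([0,1],\mathbb{C})$. Then for every fixed $z\in\mathbb{C}$ with $|z|=1$ and $z\neq1$, $$\lim_{n\to\infty}\int_0^1f_n(t)\,z^{\lfloor nt\rfloor}\,dt=0.$$ *)

theory Defs
  imports "HOL-Analysis.Analysis"
begin

definition cadlag01 :: "(real \<Rightarrow> complex) \<Rightarrow> bool" where
  "cadlag01 f \<longleftrightarrow>
     (\<forall>t\<in>{0..<1}. (f \<longlongrightarrow> f t) (at_right t)) \<and>
     (\<forall>t\<in>{0<..1}. \<exists>l. (f \<longlongrightarrow> l) (at_left t))"

end

theory Submission
  imports Defs "HOL-Analysis.Analysis"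
begin
lemma step_meas:
 fixes F :: "real \<Rightarrow> complex" assumes "continuous_on UNIV F"
 shows "(\<lambda>t. F t * z ^ nat \<lfloor>real n * t\<rfloor>) \<in> borel_measurable (lebesgue_on S)"
proof -
  have "(\<lambda>t. z ^ nat \<lfloor>real n * t\<rfloor>) \<in> borel_measurable borel" by measurable
  then have "(\<lambda>t. F t * z ^ nat \<lfloor>real n * t\<rfloor>) \<in> borel_measurable borel"
    using assms(1) by (intro borel_measurable_times[OF borel_measurable_continuous_onI]) auto
  then show ?thesis by (simp add: measurable_completion measurable_restrict_space1)
qed

lemma step_int:
 fixes F :: "real \<Rightarrow> complex" assumes "continuous_on UNIV F" "norm z = 1"
 shows "(\<lambda>t. F t * z ^ nat \<lfloor>real n * t\<rfloor>) integrable_on {a..b}"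
proof -
  have "compact (F ` {a..b})"
    by (rule compact_continuous_image) (use assms(1) continuous_on_subset in auto)
  then obtain M where M: "\<And>t. t \<in> {a..b} \<Longrightarrow> norm (F t) \<le> M"
    by (meson bounded_iff compact_imp_bounded image_eqI)
  show ?thesis
  proof (rule measurable_bounded_by_integrable_imp_integrable[where g="\<lambda>_. M"])
    show "(\<lambda>t. F t * z ^ nat \<lfloor>real n * t\<rfloor>) \<in> borel_measurable (lebesgue_on {a..b})"
      using step_meas[OF assms(1)] .
    show "(\<lambda>_. M) integrable_on {a..b}" by (rule integrable_const_ivl)
    show "{a..b} \<in> sets lebesgue" by simp
    fix t assume "t \<in> {a..b}"
    then show "norm (F t * z ^ nat \<lfloor>real n * t\<rfloor>) \<le> M"
      using M assms(2) by (simp add: norm_mult norm_power)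
  qed
qed

lemma int_bound:
  fixes g :: "real \<Rightarrow> complex"
  assumes "g integrable_on {a..b}" "a \<le> b" "\<And>t. t \<in> {a..b} \<Longrightarrow> norm (g t) \<le> B"
  shows "norm (integral {a..b} g) \<le> B * (b - a)"
proof -
  have "0 \<le> B" using assms(3)[of a] assms(2) by (meson atLeastAtMost_iff norm_ge_zero order_trans order_refl)
  have "(g has_integral integral {a..b} g) (cbox a b)" using assms(1) by (simp add: has_integral_integral)
  from has_integral_bound[OF \<open>0 \<le> B\<close> this] assms show ?thesis
    by auto
qed

lemma key:
  fixes F :: "real \<Rightarrow> complex"
  assumes Fc: "continuous_on UNIV F" and z: "norm z = 1" and M: "\<And>t. norm (F t) \<le> M"
    and n: "n \<ge> 1" and e: "\<And>x. x \<in> {0..1} \<Longrightarrow> norm (F x - F (x + 1 / real n)) \<le> e"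
  shows "norm (z - 1) * norm (integral {0..1} (\<lambda>t. F t * z ^ nat \<lfloor>real n * t\<rfloor>)) \<le> e + 2 * M / real n"
proof -
  define c where "c = 1 / real n"
  define G where "G = (\<lambda>t. F t * z ^ nat \<lfloor>real n * t\<rfloor>)"
  define I where "I = integral {0..1} G"
  define J where "J = integral {c..1+c} G"
  have c: "0 < c" "c \<le> 1" using n by (auto simp: c_def)
  have Gi: "G integrable_on {a..b}" for a b unfolding G_def by (rule step_int[OF Fc z])
  have Fc': "continuous_on UNIV (\<lambda>x. F (x + c))"
    by (rule continuous_on_compose2[OF Fc]) (auto intro!: continuous_intros)
  have Hi: "(\<lambda>x. F (x + c) * z ^ nat \<lfloor>real n * x\<rfloor>) integrable_on {a..b}" for a b
    by (rule step_int[OF Fc' z])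
  have "((\<lambda>x. G (1 *\<^sub>R x + c)) has_integral (J /\<^sub>R 1 ^ DIM(real)))
           (cbox ((c - c) /\<^sub>R 1) ((1 + c - c) /\<^sub>R 1))"
    unfolding J_def by (rule has_integral_affinity') (use Gi[of c "1+c"] in \<open>auto simp: has_integral_integral\<close>)
  then have sh: "((\<lambda>x. G (x + c)) has_integral J) {0..1}" by simp
  have Gs: "G (x + c) = z * (F (x + c) * z ^ nat \<lfloor>real n * x\<rfloor>)" if "x \<in> {0..1}" for x
  proof -
    have "real n * (x + c) = real n * x + 1" using n by (simp add: c_def algebra_simps)
    then have "\<lfloor>real n * (x + c)\<rfloor> = \<lfloor>real n * x\<rfloor> + 1" by simp
    moreover have "\<lfloor>real n * x\<rfloor> \<ge> 0" using that by auto
    ultimately have "nat \<lfloor>real n * (x + c)\<rfloor> = Suc (nat \<lfloor>real n * x\<rfloor>)"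
      by (metis Suc_nat_eq_nat_zadd1 add.commute)
    then show ?thesis by (simp add: G_def)
  qed
  have "((\<lambda>x. z * (F (x + c) * z ^ nat \<lfloor>real n * x\<rfloor>)) has_integral J) {0..1}"
    by (rule has_integral_eq[OF _ sh]) (rule Gs)
  then have J1: "J = z * integral {0..1} (\<lambda>x. F (x + c) * z ^ nat \<lfloor>real n * x\<rfloor>)"
    by (metis integral_mult_right integral_unique)
  have d: "z * I - J = z * integral {0..1} (\<lambda>x. (F x - F (x + c)) * z ^ nat \<lfloor>real n * x\<rfloor>)"
  proof -
    have "integral {0..1} (\<lambda>x. (F x - F (x + c)) * z ^ nat \<lfloor>real n * x\<rfloor>) =
      integral {0..1} (\<lambda>x. F x * z ^ nat \<lfloor>real n * x\<rfloor>) - integral {0..1} (\<lambda>x. F (x + c) * z ^ nat \<lfloor>real n * x\<rfloor>)"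
      unfolding left_diff_distrib by (rule integral_diff[OF step_int[OF Fc z] Hi])
    then show ?thesis by (simp add: J1 I_def G_def right_diff_distrib)
  qed
  have "norm (integral {0..1} (\<lambda>x. (F x - F (x + c)) * z ^ nat \<lfloor>real n * x\<rfloor>)) \<le> e * (1 - 0)"
  proof (rule int_bound)
    show "(\<lambda>x. (F x - F (x + c)) * z ^ nat \<lfloor>real n * x\<rfloor>) integrable_on {0..1}"
      using integrable_diff[OF step_int[OF Fc z] Hi] by (simp add: algebra_simps)
    fix t :: real assume "t \<in> {0..1}"
    then show "norm ((F t - F (t + c)) * z ^ nat \<lfloor>real n * t\<rfloor>) \<le> e"
      using e[of t] z by (simp add: norm_mult norm_power c_def)
  qed simp
  then have b1: "norm (z * I - J) \<le> e" using d z by (simp add: norm_mult)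
  have J2: "J = integral {c..1} G + integral {1..1+c} G"
    unfolding J_def using c by (intro Henstock_Kurzweil_Integration.integral_combine[symmetric] Gi) auto
  have I2: "I = integral {0..c} G + integral {c..1} G"
    unfolding I_def using c by (intro Henstock_Kurzweil_Integration.integral_combine[symmetric] Gi) auto
  have Gb: "norm (G t) \<le> M" for t using M[of t] z by (simp add: G_def norm_mult norm_power)
  have b2: "norm (integral {1..1+c} G) \<le> M * (1 + c - 1)"
    by (rule int_bound[OF Gi]) (use c Gb in auto)
  have b3: "norm (integral {0..c} G) \<le> M * (c - 0)"
    by (rule int_bound[OF Gi]) (use c Gb in auto)
  have "(z - 1) * I = (z * I - J) + integral {1..1+c} G - integral {0..c} G"
    using J2 I2 by (simp add: algebra_simps)
  then have "norm ((z - 1) * I) \<le> norm (z * I - J) + norm (integral {1..1+c} G) + norm (integral {0..c} G)"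
    by (metis add_right_mono norm_triangle_ineq norm_triangle_ineq4 order_trans)
  also have "\<dots> \<le> e + 2 * M / real n" using b1 b2 b3 by (simp add: c_def)
  finally show ?thesis by (simp add: I_def G_def norm_mult)
qed

lemma cont_ext:
  fixes f :: "real \<Rightarrow> complex"
  assumes "continuous_on {0..1} f"
  shows "\<exists>F. continuous_on UNIV F \<and> (\<forall>t\<in>{0..1}. F t = f t) \<and> (\<exists>M. \<forall>t. norm (F t) \<le> M)"
proof -
  define F where "F = (\<lambda>t. f (max 0 (min 1 t)))"
  have Fc: "continuous_on UNIV F" unfolding F_def
    by (rule continuous_on_compose2[OF assms(1)]) (auto intro!: continuous_intros)
  have FF: "\<forall>t\<in>{0..1}. F t = f t" by (auto simp: F_def)
  have "bounded (f ` {0..1})"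
    by (rule compact_imp_bounded[OF compact_continuous_image[OF assms(1)]]) simp
  then obtain M where M: "\<forall>x\<in>f ` {0..1}. norm x \<le> M" by (auto simp: bounded_iff)
  have "norm (F t) \<le> M" for t unfolding F_def by (rule M[rule_format]) auto
  with Fc FF show ?thesis by blast
qed

lemma main:
  fixes f :: "real \<Rightarrow> complex"
  assumes "continuous_on {0..1} f" "norm z = 1" "z \<noteq> 1"
  shows "(\<lambda>n. integral {0..1} (\<lambda>t. f t * z ^ nat \<lfloor>real n * t\<rfloor>)) \<longlonglongrightarrow> 0"
proof -
  obtain F M where Fc: "continuous_on UNIV F" and FF: "\<forall>t\<in>{0..1}. F t = f t"
    and M: "\<And>t. norm (F t) \<le> M"
    using cont_ext[OF assms(1)] by blast
  have M0: "M \<ge> 0" using M[of 0] norm_ge_zero[of "F 0"] by linarith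
  have uc: "uniformly_continuous_on {0..2} F"
    by (rule compact_uniformly_continuous) (use Fc continuous_on_subset in auto)
  have zn: "norm (z - 1) > 0" using assms(3) by simp
  show ?thesis
  proof (rule LIMSEQ_I)
    fix r :: real assume r: "r > 0"
    define e where "e = r * norm (z - 1) / 2"
    have e0: "e > 0" using r zn by (simp add: e_def)
    obtain d where d: "d > 0" "\<forall>x\<in>{0..2}. \<forall>y\<in>{0..2}. dist y x < d \<longrightarrow> dist (F y) (F x) < e"
      using uc[unfolded uniformly_continuous_on_def] e0 by metis
    obtain N :: nat where N: "max (1 / d) (4 * M / (r * norm (z - 1))) < real N"
      using reals_Archimedean2 by blast
    show "\<exists>no. \<forall>n\<ge>no. norm (integral {0..1} (\<lambda>t. f t * z ^ nat \<lfloor>real n * t\<rfloor>) - 0) < r"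
    proof (intro exI allI impI)
      fix n assume nN: "N \<le> n"
      have N1: "1 / d < real N" "4 * M / (r * norm (z - 1)) < real N" using N by auto
      have Npos: "real N > 0" using N1(1) d(1) by (smt (verit) divide_pos_pos)
      have nge: "real N \<le> real n" using nN by simp
      then have npos: "real n > 0" using Npos by linarith
      have n1: "n \<ge> 1" using npos by simp
      have "1 / real n \<le> 1 / real N" using nge Npos by (simp add: frac_le)
      also have "1 / real N < d" using N1(1) d(1) Npos by (simp add: field_simps)
      finally have nd: "1 / real n < d" .
      have n_le1: "1 / real n \<le> 1" using n1 by simp
      have ee: "norm (F x - F (x + 1 / real n)) \<le> e" if "x \<in> {0..1}" for x
      proof -
        have p: "0 < 1 / real n" using npos by simp
        have "x \<in> {0..2}" using that by auto
        moreover have "x + 1 / real n \<in> {0..2}" unfolding atLeastAtMost_iff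
          using that n_le1 p by (intro conjI; simp only: atLeastAtMost_iff; linarith)
        moreover have "dist (x + 1 / real n) x < d" using nd by (simp add: dist_norm)
        ultimately have "dist (F (x + 1 / real n)) (F x) < e" using d(2) by blast
        then show ?thesis by (simp add: dist_norm norm_minus_commute)
      qed
      have k: "norm (z - 1) * norm (integral {0..1} (\<lambda>t. F t * z ^ nat \<lfloor>real n * t\<rfloor>)) \<le> e + 2 * M / real n"
        by (rule key[OF Fc assms(2) M n1 ee])
      have "4 * M < r * norm (z - 1) * real N"
        using N1(2) r zn by (simp add: field_simps)
      also have "\<dots> \<le> r * norm (z - 1) * real n" using nge r zn by simp
      finally have "2 * M / real n < r * norm (z - 1) / 2" using npos by (simp add: field_simps)
      with k have "norm (z - 1) * norm (integral {0..1} (\<lambda>t. F t * z ^ nat \<lfloor>real n * t\<rfloor>)) < norm (z - 1) * r"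
        by (simp add: e_def field_simps)
      then have "norm (integral {0..1} (\<lambda>t. F t * z ^ nat \<lfloor>real n * t\<rfloor>)) < r"
        using zn by simp
      moreover have "integral {0..1} (\<lambda>t. F t * z ^ nat \<lfloor>real n * t\<rfloor>) = integral {0..1} (\<lambda>t. f t * z ^ nat \<lfloor>real n * t\<rfloor>)"
        by (rule integral_cong) (simp add: FF)
      ultimately show "norm (integral {0..1} (\<lambda>t. f t * z ^ nat \<lfloor>real n * t\<rfloor>) - 0) < r" by simp
    qed
  qed
qed

theorem theorem13:
  fixes fn :: "nat \<Rightarrow> real \<Rightarrow> complex" and f :: "real \<Rightarrow> complex" and z :: complex
  assumes "\<And>n. cadlag01 (fn n)"
    and "continuous_on {0..1} f"
    and "uniform_limit {0..1} fn f sequentially"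
    and "norm z = 1" and "z \<noteq> 1"
  shows "(\<lambda>n. integral {0..1} (\<lambda>t. fn n t * z ^ nat \<lfloor>real n * t\<rfloor>)) \<longlonglongrightarrow> 0"
proof (rule LIMSEQ_I)
  fix r :: real assume r: "r > 0"
  obtain F where Fc: "continuous_on UNIV F" and FF: "\<forall>t\<in>{0..1}. F t = f t"
    using cont_ext[OF assms(2)] by blast
  have Gi: "(\<lambda>t. f t * z ^ nat \<lfloor>real n * t\<rfloor>) integrable_on {0..1}" for n
    by (rule integrable_eq[OF step_int[OF Fc assms(4), where n=n]]) (simp add: FF)
  have r2: "r / 2 > 0" using r by simp
  obtain N1 where N1: "\<And>n. n \<ge> N1 \<Longrightarrow> norm (integral {0..1} (\<lambda>t. f t * z ^ nat \<lfloor>real n * t\<rfloor>) - 0) < r / 2"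
    using LIMSEQ_D[OF main[OF assms(2,4,5)] r2] by blast
  obtain N2 where N2: "\<And>n. n \<ge> N2 \<Longrightarrow> \<forall>t\<in>{0..1}. dist (fn n t) (f t) < r / 2"
    using uniform_limitD[OF assms(3) r2] unfolding eventually_sequentially by blast
  define N where "N = max N1 N2"
  have N: "norm (integral {0..1} (\<lambda>t. f t * z ^ nat \<lfloor>real n * t\<rfloor>)) < r / 2
      \<and> (\<forall>t\<in>{0..1}. dist (fn n t) (f t) < r / 2)" if "n \<ge> N" for n
    using N1[of n] N2[of n] that by (simp add: N_def)
  show "\<exists>no. \<forall>n\<ge>no. norm (integral {0..1} (\<lambda>t. fn n t * z ^ nat \<lfloor>real n * t\<rfloor>) - 0) < r"
  proof (intro exI allI impI)
    fix n assume "N \<le> n"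
    note Nn = N[OF this]
    show "norm (integral {0..1} (\<lambda>t. fn n t * z ^ nat \<lfloor>real n * t\<rfloor>) - 0) < r"
    proof (cases "(\<lambda>t. fn n t * z ^ nat \<lfloor>real n * t\<rfloor>) integrable_on {0..1}")
      case False
      then show ?thesis using r by (simp add: not_integrable_integral)
    next
      case True
      have Di: "(\<lambda>t. (fn n t - f t) * z ^ nat \<lfloor>real n * t\<rfloor>) integrable_on {0..1}"
        using integrable_diff[OF True Gi[of n]] by (simp add: algebra_simps)
      have eq: "integral {0..1} (\<lambda>t. fn n t * z ^ nat \<lfloor>real n * t\<rfloor>) =
          integral {0..1} (\<lambda>t. f t * z ^ nat \<lfloor>real n * t\<rfloor>) + integral {0..1} (\<lambda>t. (fn n t - f t) * z ^ nat \<lfloor>real n * t\<rfloor>)"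
        by (subst integral_add[OF Gi Di, symmetric]) (simp add: algebra_simps)
      have "norm (integral {0..1} (\<lambda>t. (fn n t - f t) * z ^ nat \<lfloor>real n * t\<rfloor>)) \<le> r / 2 * (1 - 0)"
      proof (rule int_bound[OF Di])
        fix t :: real assume "t \<in> {0..1}"
        then have "dist (fn n t) (f t) < r / 2" using Nn by blast
        then show "norm ((fn n t - f t) * z ^ nat \<lfloor>real n * t\<rfloor>) \<le> r / 2"
          using assms(4) by (simp add: norm_mult norm_power dist_norm)
      qed simp
      then show ?thesis using Nn eq norm_triangle_ineq[of "integral {0..1} (\<lambda>t. f t * z ^ nat \<lfloor>real n * t\<rfloor>)"
          "integral {0..1} (\<lambda>t. (fn n t - f t) * z ^ nat \<lfloor>real n * t\<rfloor>)"] by simp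
    qed
  qed
qed

end
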